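(* The unique solution of $\frac{d}{dt}s(t)=H(\pi)s(t)$, $s(0)\in\mathbb V$, is $s(t)=e^{H(\pi)t}s(0)$, and there exist $\delta_2>0$ and $D_4<\infty$ such that for all $s(0)\in\mathbb V$ and $t\ge0$, $\|s(t)\|_2\le D_4e^{-\delta_2t}\|s(0)\|_2$.
   Context: Fix integers $C\ge1$, $d\ge1$ and a real $\sigma>0$. $\mathbb V=\{v\in\mathbb R^{C+1}:v_0=0\}$ with Euclidean norm $\|\cdot\|_2$. $\pi\in\mathbb R^{C+1}$ is the unique vector with $1=\pi_0\ge\pi_1\ge\cdots\ge\pi_C\ge0$ satisfying $\sigma(\pi_{n-1}^d-\pi_n^d)=n(\pi_n-\pi_{n+1})$ for $1\le n\le C$, $\pi_{C+1}=0$. $H(\pi):\mathbb V\to\mathbb V$ is the linear map $(H(\pi)b)_0=0$, $(H(\pi)b)_n=\sigma d\,\pi_{n-1}^{d-1}b_{n-1}-(\sigma d\,\pi_n^{d-1}+n)b_n+nb_{n+1}$ for $1\le n\le C$ (with $b_{C+1}:=0$). *)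

theory Defs
  imports "HOL-Analysis.Analysis"
begin

text \<open>Vectors of R^(C+1) are represented as functions nat => real; only the
coordinates 0..C are meaningful. The space V consists of those vectors with
v 0 = 0 (and, as a normalisation, v n = 0 for n > C).\<close>

definition inV :: "nat \<Rightarrow> (nat \<Rightarrow> real) \<Rightarrow> bool" where
  "inV C v \<longleftrightarrow> v 0 = 0 \<and> (\<forall>n>C. v n = 0)"

definition norm2 :: "nat \<Rightarrow> (nat \<Rightarrow> real) \<Rightarrow> real" where
  "norm2 C v = sqrt (\<Sum>n\<le>C. (v n)^2)"

definition is_pi :: "nat \<Rightarrow> nat \<Rightarrow> real \<Rightarrow> (nat \<Rightarrow> real) \<Rightarrow> bool" where
  "is_pi C d \<sigma> \<pi> \<longleftrightarrow>
     \<pi> 0 = 1 \<and> (\<forall>n<C. \<pi> (Suc n) \<le> \<pi> n) \<and> \<pi> C \<ge> 0 \<and> \<pi> (C+1) = 0 \<and>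
     (\<forall>n\<in>{1..C}. \<sigma> * (\<pi> (n-1) ^ d - \<pi> n ^ d) = real n * (\<pi> n - \<pi> (n+1)))"

definition Hmap :: "nat \<Rightarrow> nat \<Rightarrow> real \<Rightarrow> (nat \<Rightarrow> real) \<Rightarrow> (nat \<Rightarrow> real) \<Rightarrow> (nat \<Rightarrow> real)" where
  "Hmap C d \<sigma> \<pi> b = (\<lambda>n. if n = 0 \<or> n > C then 0 else
      \<sigma> * real d * \<pi> (n-1) ^ (d-1) * b (n-1)
      - (\<sigma> * real d * \<pi> n ^ (d-1) + real n) * b n
      + real n * (if n + 1 \<le> C then b (n+1) else 0))"

definition expH :: "((nat \<Rightarrow> real) \<Rightarrow> (nat \<Rightarrow> real)) \<Rightarrow> real \<Rightarrow> (nat \<Rightarrow> real) \<Rightarrow> (nat \<Rightarrow> real)" where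
  "expH H t v = (\<lambda>n. \<Sum>k. t ^ k / fact k * (H ^^ k) v n)"

definition is_solution :: "nat \<Rightarrow> ((nat \<Rightarrow> real) \<Rightarrow> (nat \<Rightarrow> real)) \<Rightarrow> (real \<Rightarrow> nat \<Rightarrow> real) \<Rightarrow> bool" where
  "is_solution C H s \<longleftrightarrow> (\<forall>t\<ge>0. inV C (s t) \<and>
      (\<forall>n\<le>C. ((\<lambda>\<tau>. s \<tau> n) has_real_derivative H (s t) n) (at t within {0..})))"

end

theory Submission imports Defs begin

definition mop :: "nat \<Rightarrow> (nat \<Rightarrow> nat \<Rightarrow> real) \<Rightarrow> (nat \<Rightarrow> real) \<Rightarrow> nat \<Rightarrow> real" where
  "mop C f x = (\<lambda>n. if n = 0 \<or> n > C then 0 else \<Sum>m\<le>C. f n m * x m)"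

definition norm1 :: "nat \<Rightarrow> (nat \<Rightarrow> real) \<Rightarrow> real" where
  "norm1 C x = (\<Sum>n\<le>C. \<bar>x n\<bar>)"

lemma mop_out: "n = 0 \<or> n > C \<Longrightarrow> mop C f x n = 0"
  by (simp add: mop_def)

lemma funpow_out: "k \<ge> 1 \<Longrightarrow> n = 0 \<or> n > C \<Longrightarrow> (mop C f ^^ k) x n = 0"
  by (cases k) (auto simp: mop_def)

lemma norm1_nonneg: "norm1 C x \<ge> 0"
  unfolding norm1_def by (simp add: sum_nonneg)

lemma abs_le_norm1: "n \<le> C \<Longrightarrow> \<bar>x n\<bar> \<le> norm1 C x"
  unfolding norm1_def by (rule member_le_sum) auto

definition Af :: "nat \<Rightarrow> (nat \<Rightarrow> nat \<Rightarrow> real) \<Rightarrow> real" where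
  "Af C f = (\<Sum>n\<le>C. \<Sum>m\<le>C. \<bar>f n m\<bar>)"

lemma Af_nonneg: "Af C f \<ge> 0"
  unfolding Af_def by (simp add: sum_nonneg)

lemma norm1_mop: "norm1 C (mop C f x) \<le> Af C f * norm1 C x"
proof -
  have "\<bar>mop C f x n\<bar> \<le> (\<Sum>m\<le>C. \<bar>f n m\<bar>) * norm1 C x" if "n \<le> C" for n
  proof -
    have "\<bar>mop C f x n\<bar> \<le> \<bar>\<Sum>m\<le>C. f n m * x m\<bar>" by (simp add: mop_def)
    also have "\<dots> \<le> (\<Sum>m\<le>C. \<bar>f n m\<bar> * \<bar>x m\<bar>)"
      by (rule order_trans[OF sum_abs]) (simp add: abs_mult)
    also have "\<dots> \<le> (\<Sum>m\<le>C. \<bar>f n m\<bar> * norm1 C x)"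
      by (rule sum_mono) (simp add: abs_le_norm1 mult_left_mono)
    finally show ?thesis by (simp add: sum_distrib_right)
  qed
  then have "norm1 C (mop C f x) \<le> (\<Sum>n\<le>C. (\<Sum>m\<le>C. \<bar>f n m\<bar>) * norm1 C x)"
    unfolding norm1_def by (intro sum_mono) auto
  then show ?thesis by (simp add: Af_def sum_distrib_right)
qed

lemma norm1_pow: "norm1 C ((mop C f ^^ k) x) \<le> Af C f ^ k * norm1 C x"
proof (induction k)
  case 0 then show ?case by simp
next
  case (Suc k)
  have "norm1 C ((mop C f ^^ Suc k) x) \<le> Af C f * norm1 C ((mop C f ^^ k) x)"
    using norm1_mop by simp
  also have "\<dots> \<le> Af C f * (Af C f ^ k * norm1 C x)"
    by (rule mult_left_mono[OF Suc Af_nonneg])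
  finally show ?case by (simp add: mult.assoc)
qed

lemma abs_pow_le: "\<bar>(mop C f ^^ k) x n\<bar> \<le> Af C f ^ k * norm1 C x + \<bar>x n\<bar>"
proof (cases "n \<le> C \<and> n \<noteq> 0")
  case True
  then have "\<bar>(mop C f ^^ k) x n\<bar> \<le> Af C f ^ k * norm1 C x"
    using abs_le_norm1 norm1_pow order_trans by blast
  then show ?thesis by simp
next
  case False
  then show ?thesis
  proof (cases k)
    case 0 then show ?thesis using norm1_nonneg[of C x] Af_nonneg[of C f] by simp
  next
    case (Suc j)
    then have "(mop C f ^^ k) x n = 0" using False funpow_out[of k n C f x] by auto
    then show ?thesis using norm1_nonneg[of C x] Af_nonneg[of C f] by simp
  qed
qed

lemma summable_term: "summable (\<lambda>k. (mop C f ^^ k) x n / fact k * t ^ k)"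
proof -
  let ?A = "Af C f" and ?N = "norm1 C x"
  have s1: "summable (\<lambda>k. ?N * (inverse (fact k) * (\<bar>t\<bar> * ?A) ^ k) + \<bar>x n\<bar> * (inverse (fact k) * \<bar>t\<bar> ^ k))"
    by (intro summable_add summable_mult summable_exp)
  have "summable (\<lambda>k. \<bar>(mop C f ^^ k) x n / fact k * t ^ k\<bar>)"
  proof (rule summable_rabs_comparison_test[OF _ s1], intro exI allI impI)
    fix k :: nat
    have "\<bar>(mop C f ^^ k) x n / fact k * t ^ k\<bar> = \<bar>(mop C f ^^ k) x n\<bar> * (inverse (fact k) * \<bar>t\<bar> ^ k)"
      by (simp add: abs_mult power_abs field_simps)
    also have "\<dots> \<le> (?A ^ k * ?N + \<bar>x n\<bar>) * (inverse (fact k) * \<bar>t\<bar> ^ k)"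
      by (rule mult_right_mono[OF abs_pow_le]) simp
    also have "\<dots> = ?N * (inverse (fact k) * (\<bar>t\<bar> * ?A) ^ k) + \<bar>x n\<bar> * (inverse (fact k) * \<bar>t\<bar> ^ k)"
      by (simp add: power_mult_distrib algebra_simps)
    finally show "\<bar>(mop C f ^^ k) x n / fact k * t ^ k\<bar> \<le> \<dots>" .
  qed
  then show ?thesis by (rule summable_rabs_cancel)
qed

lemma expH_alt: "expH H t v n = (\<Sum>k. (H ^^ k) v n / fact k * t ^ k)"
  unfolding expH_def by (simp add: field_simps)

lemma summable_term': "summable (\<lambda>k. t ^ k / fact k * (mop C f ^^ k) x n)"
  using summable_term[of C f x n t] by (simp add: field_simps)

lemma deriv_expH:
  "((\<lambda>t. expH (mop C f) t x n) has_real_derivative mop C f (expH (mop C f) t x) n) (at t)"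
proof -
  let ?c = "\<lambda>k. (mop C f ^^ k) x n / fact k"
  have D: "((\<lambda>t. \<Sum>k. ?c k * t ^ k) has_field_derivative (\<Sum>k. diffs ?c k * t ^ k)) (at t)"
    by (rule termdiffs_strong_converges_everywhere) (use summable_term in auto)
  have df: "diffs ?c k * t ^ k = t ^ k / fact k * mop C f ((mop C f ^^ k) x) n" for k
  proof -
    have "diffs ?c k = real (Suc k) * (mop C f ((mop C f ^^ k) x) n) / (real (Suc k) * fact k)"
      by (simp add: diffs_def del: of_nat_Suc)
    also have "\<dots> = mop C f ((mop C f ^^ k) x) n / fact k" by simp
    finally show ?thesis by simp
  qed
  have R: "(\<Sum>k. t ^ k / fact k * mop C f ((mop C f ^^ k) x) n) = mop C f (expH (mop C f) t x) n"
  proof (cases "n = 0 \<or> n > C")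
    case True then show ?thesis by (simp add: mop_out)
  next
    case False
    then have "(\<Sum>k. t ^ k / fact k * mop C f ((mop C f ^^ k) x) n)
       = (\<Sum>k. \<Sum>m\<le>C. f n m * (t ^ k / fact k * (mop C f ^^ k) x m))"
      by (simp add: mop_def sum_distrib_left algebra_simps)
    also have "\<dots> = (\<Sum>m\<le>C. \<Sum>k. f n m * (t ^ k / fact k * (mop C f ^^ k) x m))"
      by (rule suminf_sum) (intro summable_mult summable_term')
    also have "\<dots> = (\<Sum>m\<le>C. f n m * (\<Sum>k. t ^ k / fact k * (mop C f ^^ k) x m))"
      by (intro sum.cong refl suminf_mult summable_term')
    also have "\<dots> = mop C f (expH (mop C f) t x) n"
      using False by (simp add: mop_def expH_def)
    finally show ?thesis .
  qed
  have E: "(\<lambda>t. expH (mop C f) t x n) = (\<lambda>t. \<Sum>k. ?c k * t ^ k)"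
    by (rule ext) (simp add: expH_def field_simps)
  show ?thesis using D unfolding E df R .
qed

lemma expH_inV: "inV C x \<Longrightarrow> inV C (expH (mop C f) t x)"
proof -
  assume x: "inV C x"
  have "(mop C f ^^ k) x n = 0" if "n = 0 \<or> n > C" for k n
    using that x funpow_out[of k n C f x] by (cases k) (auto simp: inV_def)
  then show ?thesis by (simp add: inV_def expH_def)
qed


lemma unique_sol:
  assumes s1: "is_solution C (mop C f) s1" and s2: "is_solution C (mop C f) s2"
    and s0: "s1 0 = s2 0" and t: "t \<ge> 0"
  shows "s1 t = s2 t"
proof -
  define A where "A = Af C f"
  define w where "w = (\<lambda>\<tau> n. s1 \<tau> n - s2 \<tau> n)"
  define E where "E = (\<lambda>\<tau>. \<Sum>n\<le>C. (w \<tau> n)^2)"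
  define DE where "DE = (\<lambda>\<tau>. \<Sum>n\<le>C. 2 * w \<tau> n * (mop C f (s1 \<tau>) n - mop C f (s2 \<tau>) n))"
  have A0: "A \<ge> 0" unfolding A_def by (rule Af_nonneg)
  have dE: "(E has_real_derivative DE \<tau>) (at \<tau> within {0..})" if "\<tau> \<ge> 0" for \<tau>
    unfolding E_def DE_def w_def
    by (rule DERIV_sum, rule derivative_eq_intros, rule derivative_eq_intros)
       (use s1 s2 that in \<open>auto simp: is_solution_def\<close>)
  have E0: "E \<tau> \<ge> 0" for \<tau> unfolding E_def by (simp add: sum_nonneg)
  have bnd: "DE \<tau> \<le> 2 * A * E \<tau>" for \<tau>
  proof -
    have sq: "(w \<tau> n)^2 \<le> E \<tau>" if "n \<le> C" for n
      unfolding E_def by (rule member_le_sum) (use that in auto)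
    have pr: "\<bar>w \<tau> n * w \<tau> m\<bar> \<le> E \<tau>" if "n \<le> C" "m \<le> C" for n m
    proof -
      have "2 * \<bar>w \<tau> n * w \<tau> m\<bar> \<le> (w \<tau> n)^2 + (w \<tau> m)^2"
        using sum_squares_bound[of "\<bar>w \<tau> n\<bar>" "\<bar>w \<tau> m\<bar>"] by (simp add: abs_mult power2_eq_square)
      then show ?thesis using sq[OF that(1)] sq[OF that(2)] by linarith
    qed
    have "mop C f (s1 \<tau>) n - mop C f (s2 \<tau>) n = (if n = 0 \<or> n > C then 0 else \<Sum>m\<le>C. f n m * w \<tau> m)" for n
      by (simp add: mop_def w_def sum_subtractf right_diff_distrib)
    then have "DE \<tau> = (\<Sum>n\<le>C. 2 * w \<tau> n * (if n = 0 then 0 else \<Sum>m\<le>C. f n m * w \<tau> m))"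
      unfolding DE_def by (intro sum.cong) auto
    also have "\<dots> \<le> (\<Sum>n\<le>C. 2 * (\<Sum>m\<le>C. \<bar>f n m\<bar> * E \<tau>))"
    proof (rule sum_mono)
      fix n assume n: "n \<in> {..C}"
      have "2 * w \<tau> n * (if n = 0 then 0 else \<Sum>m\<le>C. f n m * w \<tau> m) \<le> 2 * \<bar>\<Sum>m\<le>C. f n m * (w \<tau> n * w \<tau> m)\<bar>"
        by (auto simp: sum_distrib_left algebra_simps)
      also have "\<dots> \<le> 2 * (\<Sum>m\<le>C. \<bar>f n m\<bar> * E \<tau>)"
      proof -
        have "\<bar>\<Sum>m\<le>C. f n m * (w \<tau> n * w \<tau> m)\<bar> \<le> (\<Sum>m\<le>C. \<bar>f n m * (w \<tau> n * w \<tau> m)\<bar>)"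
          by (rule sum_abs)
        also have "\<dots> \<le> (\<Sum>m\<le>C. \<bar>f n m\<bar> * E \<tau>)"
          by (rule sum_mono) (use n pr in \<open>auto simp: abs_mult intro: mult_left_mono\<close>)
        finally show ?thesis by simp
      qed
      finally show "2 * w \<tau> n * (if n = 0 then 0 else \<Sum>m\<le>C. f n m * w \<tau> m) \<le> 2 * (\<Sum>m\<le>C. \<bar>f n m\<bar> * E \<tau>)" .
    qed
    also have "\<dots> = 2 * A * E \<tau>"
      by (simp add: A_def Af_def sum_distrib_left sum_distrib_right mult.assoc)
    finally show ?thesis .
  qed
  define P where "P = (\<lambda>\<tau>. E \<tau> * exp (- (2 * A) * \<tau>))"
  define DP where "DP = (\<lambda>\<tau>. DE \<tau> * exp (- (2 * A) * \<tau>) + E \<tau> * (exp (- (2 * A) * \<tau>) * (- (2 * A))))"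
  have dP: "(P has_real_derivative DP \<tau>) (at \<tau> within {0..})" if "\<tau> \<ge> 0" for \<tau>
    unfolding P_def DP_def
    by (rule derivative_eq_intros dE[OF that] refl)+ simp
  have DPle: "DP \<tau> \<le> 0" for \<tau>
  proof -
    have "DP \<tau> = (DE \<tau> - 2 * A * E \<tau>) * exp (- (2 * A) * \<tau>)" by (simp add: DP_def algebra_simps)
    also have "\<dots> \<le> 0" using bnd[of \<tau>] by (intro mult_nonpos_nonneg) auto
    finally show ?thesis .
  qed
  have dP': "(P has_derivative (\<lambda>h. DP y * h)) (at y within {0..t})" if "0 \<le> y" "y \<le> t" for y
  proof -
    have "(P has_real_derivative DP y) (at y within {0..t})"
      by (rule DERIV_subset[OF dP[OF that(1)]]) auto
    then show ?thesis by (simp add: has_field_derivative_def)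
  qed
  obtain y where "y \<in> {0..t}" and Py: "P t - P 0 = DP y * (t - 0)"
    using mvt_very_simple[of 0 t P "\<lambda>y h. DP y * h", OF t dP'] by blast
  have "E 0 = 0" unfolding E_def w_def using s0 by simp
  then have "P t \<le> 0" using Py DPle[of y] t by (simp add: P_def mult_nonpos_nonneg)
  then have "E t \<le> 0" unfolding P_def by (simp add: mult_le_0_iff)
  then have "E t = 0" using E0[of t] by linarith
  then have W: "\<forall>n\<in>{..C}. (w t n)^2 = 0" unfolding E_def by (subst (asm) sum_nonneg_eq_0_iff) auto
  have V: "inV C (s1 t)" "inV C (s2 t)" using s1 s2 t by (auto simp: is_solution_def)
  show ?thesis
  proof (intro ext)
    fix n show "s1 t n = s2 t n"
      using W V by (cases "n \<le> C") (auto simp: w_def inV_def)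
  qed
qed


lemma sum_drop0: "(\<Sum>n\<le>(C::nat). if n = 0 \<or> C < n then 0 else S n) = (\<Sum>n\<in>{1..C}. S n :: real)"
proof -
  have e: "{..C} = insert 0 {1..C}" by (auto simp: not_less_eq_eq)
  have "(\<Sum>n\<in>{1..C}. if n = 0 \<or> C < n then 0 else S n) = (\<Sum>n\<in>{1..C}. S n)"
    by (rule sum.cong) auto
  then show ?thesis by (simp add: e)
qed

locale posop =
  fixes C :: nat and g :: "nat \<Rightarrow> nat \<Rightarrow> real" and K :: real
  assumes gnn: "\<And>n m. n \<le> C \<Longrightarrow> m \<le> C \<Longrightarrow> g n m \<ge> 0"
    and col: "\<And>m. m \<le> C \<Longrightarrow> (\<Sum>n\<in>{1..C}. g n m) \<le> K"
    and K0: "K \<ge> 0"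
begin

lemma P1: "(\<And>m. x m \<ge> 0) \<Longrightarrow> mop C g x n \<ge> 0"
  unfolding mop_def by (auto intro!: sum_nonneg mult_nonneg_nonneg gnn)

lemma P2: "\<bar>mop C g x n\<bar> \<le> mop C g (\<lambda>m. \<bar>x m\<bar>) n"
proof -
  have "\<bar>\<Sum>m\<le>C. g n m * x m\<bar> \<le> (\<Sum>m\<le>C. g n m * \<bar>x m\<bar>)" if "n \<le> C"
    by (rule order_trans[OF sum_abs]) (use that gnn in \<open>auto simp: abs_mult intro!: sum_mono\<close>)
  then show ?thesis by (auto simp: mop_def)
qed

lemma P3: "(\<And>m. x m \<le> y m) \<Longrightarrow> mop C g x n \<le> mop C g y n"
  unfolding mop_def by (auto intro!: sum_mono mult_left_mono gnn)

lemma P4: "\<bar>(mop C g ^^ k) x n\<bar> \<le> (mop C g ^^ k) (\<lambda>m. \<bar>x m\<bar>) n \<and> (mop C g ^^ k) (\<lambda>m. \<bar>x m\<bar>) n \<ge> 0"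
proof (induction k arbitrary: n)
  case 0 then show ?case by simp
next
  case (Suc k)
  have "\<bar>(mop C g ^^ Suc k) x n\<bar> \<le> mop C g (\<lambda>m. \<bar>(mop C g ^^ k) x m\<bar>) n"
    using P2 by simp
  also have "\<dots> \<le> (mop C g ^^ Suc k) (\<lambda>m. \<bar>x m\<bar>) n"
    using P3[of "\<lambda>m. \<bar>(mop C g ^^ k) x m\<bar>"] Suc by simp
  finally show ?case using P1[of "(mop C g ^^ k) (\<lambda>m. \<bar>x m\<bar>)"] Suc by simp
qed

lemma P5: assumes "\<And>m. x m \<ge> 0" shows "norm1 C (mop C g x) \<le> K * norm1 C x"
proof -
  have "norm1 C (mop C g x) = (\<Sum>n\<le>C. mop C g x n)"
    unfolding norm1_def using P1[OF assms] by simp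
  also have "\<dots> = (\<Sum>n\<in>{1..C}. \<Sum>m\<le>C. g n m * x m)"
    unfolding mop_def by (rule sum_drop0)
  also have "\<dots> = (\<Sum>m\<le>C. (\<Sum>n\<in>{1..C}. g n m) * x m)"
    by (subst sum.swap) (simp add: sum_distrib_right)
  also have "\<dots> \<le> (\<Sum>m\<le>C. K * x m)"
    by (rule sum_mono) (use col assms in \<open>auto intro: mult_right_mono\<close>)
  also have "\<dots> = K * norm1 C x"
    using assms by (simp add: norm1_def sum_distrib_left)
  finally show ?thesis .
qed

lemma P6: "norm1 C ((mop C g ^^ k) (\<lambda>m. \<bar>x m\<bar>)) \<le> K ^ k * norm1 C x"
proof (induction k)
  case 0 then show ?case by (simp add: norm1_def)
next
  case (Suc k)
  have "norm1 C ((mop C g ^^ Suc k) (\<lambda>m. \<bar>x m\<bar>)) \<le> K * norm1 C ((mop C g ^^ k) (\<lambda>m. \<bar>x m\<bar>))"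
    using P5[of "(mop C g ^^ k) (\<lambda>m. \<bar>x m\<bar>)"] P4 by simp
  also have "\<dots> \<le> K * (K ^ k * norm1 C x)" by (rule mult_left_mono[OF Suc K0])
  finally show ?case by (simp add: mult.assoc)
qed

lemma P7: assumes t: "t \<ge> 0" shows "norm1 C (expH (mop C g) t x) \<le> exp (K * t) * norm1 C x"
proof -
  let ?G = "mop C g" and ?ax = "\<lambda>m. \<bar>x m\<bar>"
  have "norm1 C (expH ?G t x) \<le> (\<Sum>n\<le>C. \<Sum>k. t ^ k / fact k * (?G ^^ k) ?ax n)"
    unfolding norm1_def expH_def
  proof (rule sum_mono)
    fix n
    have s: "summable (\<lambda>k. t ^ k / fact k * (?G ^^ k) ?ax n)" by (rule summable_term')
    have le: "\<bar>t ^ k / fact k * (?G ^^ k) x n\<bar> \<le> t ^ k / fact k * (?G ^^ k) ?ax n" for k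
    proof -
      have "\<bar>t ^ k / fact k * (?G ^^ k) x n\<bar> = t ^ k / fact k * \<bar>(?G ^^ k) x n\<bar>"
        using t by (simp add: abs_mult)
      also have "\<dots> \<le> t ^ k / fact k * (?G ^^ k) ?ax n"
        using P4[of k x n] t by (intro mult_left_mono) auto
      finally show ?thesis .
    qed
    have sa: "summable (\<lambda>k. \<bar>t ^ k / fact k * (?G ^^ k) x n\<bar>)"
      by (rule summable_rabs_comparison_test[OF _ s]) (use le in auto)
    show "\<bar>\<Sum>k. t ^ k / fact k * (?G ^^ k) x n\<bar> \<le> (\<Sum>k. t ^ k / fact k * (?G ^^ k) ?ax n)"
      by (rule order_trans[OF summable_rabs[OF sa]]) (rule suminf_le[OF le sa s])
  qed
  also have "\<dots> = (\<Sum>k. \<Sum>n\<le>C. t ^ k / fact k * (?G ^^ k) ?ax n)"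
    by (rule suminf_sum[symmetric]) (rule summable_term')
  also have "\<dots> = (\<Sum>k. t ^ k / fact k * norm1 C ((?G ^^ k) ?ax))"
    unfolding norm1_def using P4 by (simp add: sum_distrib_left)
  also have "\<dots> \<le> (\<Sum>k. norm1 C x * (inverse (fact k) * (K * t) ^ k))"
  proof (rule suminf_le)
    show "summable (\<lambda>k. norm1 C x * (inverse (fact k) * (K * t) ^ k))"
      by (intro summable_mult summable_exp)
    show "summable (\<lambda>k. t ^ k / fact k * norm1 C ((?G ^^ k) ?ax))"
      using summable_sum[of "{..C}" "\<lambda>n k. t ^ k / fact k * (?G ^^ k) ?ax n", OF summable_term']
      unfolding norm1_def using P4 by (simp add: sum_distrib_left)
    fix k
    have "t ^ k / fact k * norm1 C ((?G ^^ k) ?ax) \<le> t ^ k / fact k * (K ^ k * norm1 C x)"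
      by (rule mult_left_mono[OF P6]) (use t in simp)
    then show "t ^ k / fact k * norm1 C ((?G ^^ k) ?ax) \<le> norm1 C x * (inverse (fact k) * (K * t) ^ k)"
      by (simp add: power_mult_distrib field_simps)
  qed
  also have "\<dots> = norm1 C x * exp (K * t)"
  proof -
    have "(\<lambda>k. inverse (fact k) * (K * t) ^ k) sums exp (K * t)"
      using exp_converges[of "K * t"] by (simp add: field_simps)
    then show ?thesis by (simp add: suminf_mult sums_unique[symmetric] sums_summable[THEN suminf_mult])
  qed
  finally show ?thesis by (simp add: mult.commute)
qed

end


lemma expH_0: "expH F 0 x = x"
proof (rule ext)
  fix n
  have "(\<lambda>k. (0::real) ^ k / fact k * (F ^^ k) x n) = (\<lambda>k. if k = 0 then (F ^^ k) x n else 0)"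
    by (rule ext) auto
  then show "expH F 0 x n = x n"
    unfolding expH_def using sums_single[of 0 "\<lambda>k. (F ^^ k) x n"] sums_unique by fastforce
qed

lemma norm2_le_norm1: "norm2 C v \<le> norm1 C v"
  using L2_set_le_sum_abs[of v "{..C}"] by (simp add: L2_set_def norm2_def norm1_def)

lemma norm1_le_norm2: "norm1 C v \<le> sqrt (real C + 1) * norm2 C v"
proof -
  have "(\<Sum>n\<le>C. \<bar>v n\<bar> * 1)\<^sup>2 \<le> (\<Sum>n\<le>C. \<bar>v n\<bar>\<^sup>2) * (\<Sum>n\<le>C. 1\<^sup>2)"
    by (rule Cauchy_Schwarz_ineq_sum)
  then have "(norm1 C v)\<^sup>2 \<le> (real C + 1) * (\<Sum>n\<le>C. (v n)\<^sup>2)"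
    by (simp add: norm1_def algebra_simps)
  then have "sqrt ((norm1 C v)\<^sup>2) \<le> sqrt ((real C + 1) * (\<Sum>n\<le>C. (v n)\<^sup>2))"
    by (rule real_sqrt_le_mono)
  then show ?thesis using norm1_nonneg[of C v] by (simp add: norm2_def real_sqrt_mult)
qed

lemma pi_bounds:
  assumes "is_pi C d \<sigma> \<pi>" "n \<le> C"
  shows "0 \<le> \<pi> n \<and> \<pi> n \<le> 1"
proof -
  have dec: "\<pi> (Suc n) \<le> \<pi> n" if "n < C" for n using assms(1) that by (simp add: is_pi_def)
  have le1: "n \<le> C \<Longrightarrow> \<pi> n \<le> 1" for n
  proof (induction n)
    case 0 then show ?case using assms(1) by (simp add: is_pi_def)
  next
    case (Suc n) then show ?case using dec[of n] by simp
  qed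
  have ge: "k \<le> C \<Longrightarrow> \<pi> C \<le> \<pi> (C - k)" for k
  proof (induction k)
    case 0 then show ?case by simp
  next
    case (Suc k)
    then have "C - k = Suc (C - Suc k)" by simp
    then show ?case using Suc dec[of "C - Suc k"] by (metis Suc_leD diff_less le_less_trans zero_less_Suc order_trans lessI less_le_trans)
  qed
  have "\<pi> C \<le> \<pi> n" using ge[of "C - n"] assms(2) by simp
  then show ?thesis using le1[OF assms(2)] assms(1) by (simp add: is_pi_def)
qed

definition hm :: "nat \<Rightarrow> real \<Rightarrow> (nat \<Rightarrow> real) \<Rightarrow> nat \<Rightarrow> nat \<Rightarrow> real" where
  "hm d \<sigma> \<pi> n m = (if m = n - 1 then \<sigma> * real d * \<pi> m ^ (d-1) else 0)
     + (if m = n then - (\<sigma> * real d * \<pi> n ^ (d-1) + real n) else 0)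
     + (if m = n + 1 then real n else 0)"

lemma Hmap_eq: "Hmap C d \<sigma> \<pi> = mop C (hm d \<sigma> \<pi>)"
proof (intro ext)
  fix b n
  show "Hmap C d \<sigma> \<pi> b n = mop C (hm d \<sigma> \<pi>) b n"
  proof (cases "n = 0 \<or> n > C")
    case True then show ?thesis by (simp add: Hmap_def mop_def)
  next
    case False
    have "(\<Sum>m\<le>C. hm d \<sigma> \<pi> n m * b m) =
      (\<Sum>m\<le>C. (if m = n - 1 then \<sigma> * real d * \<pi> m ^ (d-1) * b m else 0))
      + (\<Sum>m\<le>C. (if m = n then - (\<sigma> * real d * \<pi> n ^ (d-1) + real n) * b m else 0))
      + (\<Sum>m\<le>C. (if m = n + 1 then real n * b m else 0))"
      unfolding hm_def sum.distrib[symmetric] using False by (intro sum.cong) auto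
    also have "\<dots> = Hmap C d \<sigma> \<pi> b n"
      using False by (auto simp: Hmap_def algebra_simps)
    finally show ?thesis using False by (simp add: mop_def)
  qed
qed


definition gm :: "nat \<Rightarrow> nat \<Rightarrow> real \<Rightarrow> (nat \<Rightarrow> real) \<Rightarrow> nat \<Rightarrow> nat \<Rightarrow> real" where
  "gm C d \<sigma> \<pi> n m = (if n = 0 then 0 else hm d \<sigma> \<pi> n m + (if m = n then \<sigma> * real d + real C + 1 else 0))"

lemma posop_g:
  assumes pi: "is_pi C d \<sigma> \<pi>" and sg: "\<sigma> > 0" and C1: "1 \<le> C"
  shows "posop C (gm C d \<sigma> \<pi>) (\<sigma> * real d + real C)"
proof
  have pb: "0 \<le> \<pi> m ^ (d-1) \<and> \<pi> m ^ (d-1) \<le> 1" if "m \<le> C" for m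
    using pi_bounds[OF pi that] by (auto intro: power_le_one)
  have ab: "0 \<le> \<sigma> * real d * \<pi> m ^ (d-1) \<and> \<sigma> * real d * \<pi> m ^ (d-1) \<le> \<sigma> * real d" if "m \<le> C" for m
  proof -
    have "\<sigma> * real d \<ge> 0" using sg by simp
    then show ?thesis using pb[OF that] mult_left_mono[of "\<pi> m ^ (d-1)" 1 "\<sigma> * real d"] by auto
  qed
  show "0 \<le> \<sigma> * real d + real C" using sg by simp
  fix n m assume n: "n \<le> C" and m: "m \<le> C"
  show "0 \<le> gm C d \<sigma> \<pi> n m"
  proof (cases "n = 0")
    case True then show ?thesis by (simp add: gm_def)
  next
    case False
    show ?thesis
    proof (cases "m = n")
      case True then show ?thesis using False ab[OF n] n by (simp add: gm_def hm_def)
    next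
      case mn: False
      show ?thesis
      proof (cases "m = n - 1")
        case True then show ?thesis using mn False ab[OF m] by (simp add: gm_def hm_def)
      next
        case F2: False then show ?thesis using mn False by (simp add: gm_def hm_def)
      qed
    qed
  qed
next
  fix m assume m: "m \<le> C"
  have pb: "0 \<le> \<pi> m ^ (d-1) \<and> \<pi> m ^ (d-1) \<le> 1"
    using pi_bounds[OF pi m] by (auto intro: power_le_one)
  define a where "a = \<sigma> * real d * \<pi> m ^ (d-1)"
  define c where "c = \<sigma> * real d + real C + 1"
  have a0: "0 \<le> a" "a \<le> \<sigma> * real d"
    using pb sg mult_left_mono[of "\<pi> m ^ (d-1)" 1 "\<sigma> * real d"] by (auto simp: a_def)
  have "(\<Sum>n\<in>{1..C}. gm C d \<sigma> \<pi> n m) =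
        (\<Sum>n\<in>{1..C}. if n = m + 1 then a else 0)
      + (\<Sum>n\<in>{1..C}. if n = m then c - (\<sigma> * real d * \<pi> n ^ (d-1) + real n) else 0)
      + (\<Sum>n\<in>{1..C}. if n = m - 1 then (if 1 \<le> m then real n else 0) else 0)"
    unfolding sum.distrib[symmetric] by (intro sum.cong) (auto simp: gm_def hm_def a_def c_def)
  also have "\<dots> = (if m + 1 \<le> C then a else 0)
      + (if 1 \<le> m then c - (\<sigma> * real d * \<pi> m ^ (d-1) + real m) else 0)
      + (if 1 \<le> m - 1 \<and> m - 1 \<le> C then (if 1 \<le> m then real (m - 1) else 0) else 0)"
    using m by (simp add: sum.delta)
  also have "\<dots> \<le> \<sigma> * real d + real C"
  proof (cases "m = 0")
    case True
    then show ?thesis using pi a0 C1 by (simp add: a_def is_pi_def)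
  next
    case False
    have "real (m - 1) = real m - 1" using False by simp
    then show ?thesis using False a0 m by (auto simp: a_def c_def)
  qed
  finally show "(\<Sum>n\<in>{1..C}. gm C d \<sigma> \<pi> n m) \<le> \<sigma> * real d + real C" .
qed


lemma mop_gm: "1 \<le> n \<Longrightarrow> n \<le> C \<Longrightarrow>
  mop C (gm C d \<sigma> \<pi>) x n = mop C (hm d \<sigma> \<pi>) x n + (\<sigma> * real d + real C + 1) * x n"
proof -
  assume n: "1 \<le> n" "n \<le> C"
  have "(\<Sum>m\<le>C. gm C d \<sigma> \<pi> n m * x m) = (\<Sum>m\<le>C. hm d \<sigma> \<pi> n m * x m)
     + (\<Sum>m\<le>C. if m = n then (\<sigma> * real d + real C + 1) * x m else 0)"
    unfolding sum.distrib[symmetric] using n by (intro sum.cong) (auto simp: gm_def algebra_simps)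
  then show ?thesis using n by (simp add: mop_def)
qed

lemma shifted_sol:
  fixes C d :: nat and \<sigma> :: real and \<pi> :: "nat \<Rightarrow> real" and v :: "nat \<Rightarrow> real"
  assumes v: "inV C v"
  defines "c \<equiv> \<sigma> * real d + real C + 1"
  shows "is_solution C (mop C (hm d \<sigma> \<pi>)) (\<lambda>\<tau> n. exp (- c * \<tau>) * expH (mop C (gm C d \<sigma> \<pi>)) \<tau> v n)"
  unfolding is_solution_def
proof (intro allI impI conjI)
  fix t :: real assume t: "t \<ge> 0"
  let ?E = "expH (mop C (gm C d \<sigma> \<pi>)) t v"
  have EV: "inV C ?E" by (rule expH_inV[OF v])
  then show "inV C (\<lambda>n. exp (- c * t) * ?E n)" by (simp add: inV_def)
  fix n assume n: "n \<le> C"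
  have D: "((\<lambda>\<tau>. exp (- c * \<tau>) * expH (mop C (gm C d \<sigma> \<pi>)) \<tau> v n) has_real_derivative
      (exp (- c * t) * (- c) * ?E n + exp (- c * t) * mop C (gm C d \<sigma> \<pi>) ?E n)) (at t)"
    by (rule derivative_eq_intros deriv_expH refl)+ simp
  have eq: "exp (- c * t) * (- c) * ?E n + exp (- c * t) * mop C (gm C d \<sigma> \<pi>) ?E n
      = mop C (hm d \<sigma> \<pi>) (\<lambda>n. exp (- c * t) * ?E n) n"
  proof (cases "n = 0")
    case True then show ?thesis using EV by (simp add: mop_def inV_def)
  next
    case False
    then show ?thesis using n mop_gm[of n C d \<sigma> \<pi> ?E]
      by (simp add: c_def mop_def sum_distrib_left algebra_simps)
  qed
  show "((\<lambda>\<tau>. exp (- c * \<tau>) * expH (mop C (gm C d \<sigma> \<pi>)) \<tau> v n) has_real_derivative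
      mop C (hm d \<sigma> \<pi>) (\<lambda>n. exp (- c * t) * ?E n) n) (at t within {0..})"
    using has_field_derivative_at_within[OF D] unfolding eq .
qed

theorem mainTheorem7:
  fixes C d :: nat and \<sigma> :: real and \<pi> :: "nat \<Rightarrow> real"
  assumes "C \<ge> 1" and "d \<ge> 1" and "\<sigma> > 0"
    and "is_pi C d \<sigma> \<pi>"
  shows "(\<forall>s0. inV C s0 \<longrightarrow>
            is_solution C (Hmap C d \<sigma> \<pi>) (\<lambda>t. expH (Hmap C d \<sigma> \<pi>) t s0) \<and>
            (\<forall>s. is_solution C (Hmap C d \<sigma> \<pi>) s \<and> s 0 = s0 \<longrightarrow>
                 (\<forall>t\<ge>0. s t = expH (Hmap C d \<sigma> \<pi>) t s0)))
       \<and> (\<exists>\<delta>2 D4. \<delta>2 > 0 \<and>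
            (\<forall>s0 t. inV C s0 \<and> t \<ge> 0 \<longrightarrow>
               norm2 C (expH (Hmap C d \<sigma> \<pi>) t s0) \<le> D4 * exp (-\<delta>2 * t) * norm2 C s0))"
proof -
  let ?h = "hm d \<sigma> \<pi>"
  have sol: "is_solution C (mop C ?h) (\<lambda>t. expH (mop C ?h) t s0)" if "inV C s0" for s0
    unfolding is_solution_def
    using expH_inV[OF that] has_field_derivative_at_within[OF deriv_expH] by blast
  have P1: "\<forall>s0. inV C s0 \<longrightarrow>
            is_solution C (mop C ?h) (\<lambda>t. expH (mop C ?h) t s0) \<and>
            (\<forall>s. is_solution C (mop C ?h) s \<and> s 0 = s0 \<longrightarrow>
                 (\<forall>t\<ge>0. s t = expH (mop C ?h) t s0))"
  proof (intro allI impI conjI)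
    fix s0 assume s0: "inV C s0"
    show "is_solution C (mop C ?h) (\<lambda>t. expH (mop C ?h) t s0)" by (rule sol[OF s0])
    fix s t assume s: "is_solution C (mop C ?h) s \<and> s 0 = s0" and t: "(t::real) \<ge> 0"
    show "s t = expH (mop C ?h) t s0"
      using unique_sol[of C ?h s "\<lambda>t. expH (mop C ?h) t s0" t] s sol[OF s0] t by (simp add: expH_0)
  qed
  define c where "c = \<sigma> * real d + real C + 1"
  interpret P: posop C "gm C d \<sigma> \<pi>" "\<sigma> * real d + real C"
    by (rule posop_g) (use assms in auto)
  have P2: "norm2 C (expH (mop C ?h) t s0) \<le> sqrt (real C + 1) * exp (- 1 * t) * norm2 C s0"
    if s0: "inV C s0" and t: "t \<ge> 0" for s0 t
  proof -
    let ?E = "expH (mop C (gm C d \<sigma> \<pi>)) t s0"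
    have "expH (mop C ?h) t s0 = (\<lambda>n. exp (- c * t) * ?E n)"
      using unique_sol[OF sol[OF s0] shifted_sol[OF s0, of d \<sigma> \<pi>]] t
      by (simp add: expH_0 c_def)
    have "norm2 C (expH (mop C ?h) t s0) \<le> norm1 C (\<lambda>n. exp (- c * t) * ?E n)"
      unfolding \<open>expH (mop C ?h) t s0 = _\<close> by (rule norm2_le_norm1)
    also have "\<dots> = exp (- c * t) * norm1 C ?E"
      by (simp add: norm1_def abs_mult sum_distrib_left)
    also have "\<dots> \<le> exp (- c * t) * (exp ((\<sigma> * real d + real C) * t) * norm1 C s0)"
      by (rule mult_left_mono[OF P.P7[OF t]]) simp
    also have "\<dots> = exp (- 1 * t) * norm1 C s0"
    proof -
      have "- c * t + (\<sigma> * real d + real C) * t = - 1 * t" by (simp add: c_def algebra_simps)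
      then have "exp (- c * t) * exp ((\<sigma> * real d + real C) * t) = exp (- 1 * t)"
        by (metis exp_add)
      then show ?thesis by (metis mult.assoc)
    qed
    also have "\<dots> \<le> exp (- 1 * t) * (sqrt (real C + 1) * norm2 C s0)"
      by (rule mult_left_mono[OF norm1_le_norm2]) simp
    finally show ?thesis by (simp only: mult_ac)
  qed
  show ?thesis
    unfolding Hmap_eq
  proof (rule conjI[OF P1])
    show "\<exists>\<delta>2 D4. \<delta>2 > 0 \<and> (\<forall>s0 t. inV C s0 \<and> t \<ge> 0 \<longrightarrow>
               norm2 C (expH (mop C ?h) t s0) \<le> D4 * exp (-\<delta>2 * t) * norm2 C s0)"
      by (rule exI[of _ 1], rule exI[of _ "sqrt (real C + 1)"]) (use P2 in simp)
  qed
qed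

end
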